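(* Let $t$ be a probabilistic process term of $P_{\mathrm{PA}}$ and let $\sigma_1,\sigma_2$ be closed substitutions such that $\mathbf d(\sigma_1(x),\sigma_2(x))<1$ for every state variable $x$. Then \[ \mathbf d(\sigma_1(t),\sigma_2(t))\le \mathrm{pda}\bigl(\llbracket t\rrbracket_{\mathcal P},\mathbf d(\sigma_1,\sigma_2)\bigr). \]
   Context: Probabilistic transition systems and bisimilarity metric. A signature $\Sigma$ is a countable set of operators $f$, each with an arity $r(f)\in\mathbb N$. Fix disjoint countably infinite sets $\mathcal V_s$ of state variables and $\mathcal V_d$ of distribution variables; $\mathcal V=\mathcal V_s\cup\mathcal V_d$. Open (state) terms are built from state variables and operators; closed terms (processes) $T(\Sigma)$ contain no variables. $\Delta(T(\Sigma))$ is the set of discrete probability distributions on $T(\Sigma)$, $\delta_t$ is the Dirac distribution at $t$, and for distributions $\pi_1,\dots,\pi_{r(f)}$, $f(\pi_1,\dots,\pi_{r(f)})$ is the distribution assigning $f(t_1,\dots,t_{r(f)})$ probability $\prod_i\pi_i(t_i)$. Distribution terms are: distribution variables $\mu$, $\delta(t)$ for state terms $t$, convex combinations $\sum_{i\in I}q_i\theta_i$ ($q_i\in(0,1]$, $\sum q_i=1$), and $f(\theta_1,\dots,\theta_{r(f)})$. A closed substitution $\sigma$ maps state variables to closed terms and distribution variables to distributions; it extends homomorphically to state terms and to distribution terms via $\sigma(\delta(t))=\delta_{\sigma(t)}$, $\sigma(\sum q_i\theta_i)=\sum q_i\sigma(\theta_i)$, $\sigma(f(\theta_1,\dots))=f(\sigma(\theta_1),\dots)$.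 A PTS is $(T(\Sigma),A,\to)$ with $A$ a countable set of actions and $\to\subseteq T(\Sigma)\times A\times\Delta(T(\Sigma))$; write $t\xrightarrow{a}\pi$, and $\mathit{der}(t,a)=\{\pi\mid t\xrightarrow a\pi\}$. A PGSOS rule has the form $\dfrac{\{x_i\xrightarrow{a_{i,m}}\mu_{i,m}\mid i\in I,m\in M_i\}\ \ \{x_i\not\xrightarrow{b_{i,n}}\mid i\in I,n\in N_i\}}{f(x_1,\dots,x_{r(f)})\xrightarrow{a}\theta}$ with $I=\{1,\dots,r(f)\}$, finite $M_i,N_i$, pairwise distinct $x_i\in\mathcal V_s$, pairwise distinct $\mu_{i,m}\in\mathcal V_d$, and $\theta$ a distribution term whose variables are among the $x_i$ and $\mu_{i,m}$. A PTSS $(\Sigma,A,R)$ with $R$ a countable set of PGSOS rules determines a unique supported model: $t\xrightarrow a\pi$ iff for some rule and closed substitution $\sigma$, $\sigma(x_i)\xrightarrow{a_{i,m}}\sigma(\mu_{i,m})$ for all positive premises, $\sigma(x_i)$ has no $b_{i,n}$-transition for all negative premises, $\sigma(f(x_1,\dots))=t$ and $\sigma(\theta)=\pi$. For $d:T(\Sigma)\times T(\Sigma)\to[0,1]$, the Kantorovich lifting is $K(d)(\pi,\pi')=\min_{\omega}\sum_{t,t'}d(t,t')\omega(t,t')$ over couplings $\omega$ of $\pi,\pi'$; the Hausdorff lifting is $H(\hat d)(\Pi_1,\Pi_2)=\max\{\sup_{\pi_1\in\Pi_1}\inf_{\pi_2\in\Pi_2}\hat d(\pi_1,\pi_2),\sup_{\pi_2\in\Pi_2}\inf_{\pi_1\in\Pi_1}\hat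 d(\pi_2,\pi_1)\}$ with $\inf\emptyset=1$, $\sup\emptyset=0$. Let $B(d)(t,t')=\sup_{a\in A}H(K(d))(\mathit{der}(t,a),\mathit{der}(t',a))$. The bisimilarity metric $\mathbf d$ is the least fixed point of $B$ on $[0,1]^{T(\Sigma)\times T(\Sigma)}$ ordered pointwise. The process algebra $P_{\mathrm{PA}}$: operators are the constant $0$, for each $a\in A$, $n\ge1$, $q_1,\dots,q_n\in(0,1]$ with $\sum q_i=1$ the $n$-ary prefix $a.\bigoplus_{i=1}^n[q_i]\_$ (written $a.\_$ when $n=1$), binary $+$, and binary $\|_B$ for each $B\subseteq A$ ($\|$ denotes $\|_A$). Rules: $a.\bigoplus_{i}[q_i]x_i\xrightarrow a\sum_i q_i\delta(x_i)$; from $x_1\xrightarrow a\mu_1$ infer $x_1+x_2\xrightarrow a\mu_1$; from $x_2\xrightarrow a\mu_2$ infer $x_1+x_2\xrightarrow a\mu_2$; for $a\in B$ from $x_1\xrightarrow a\mu_1$, $x_2\xrightarrow a\mu_2$ infer $x_1\|_Bx_2\xrightarrow a\mu_1\|_B\mu_2$; for $a\notin B$ from $x_1\xrightarrow a\mu_1$ infer $x_1\|_Bx_2\xrightarrow a\mu_1\|_B\delta(x_2)$ and from $x_2\xrightarrow a\mu_2$ infer $x_1\|_Bx_2\xrightarrow a\delta(x_1)\|_B\mu_2$. Probabilistic process terms are the open terms built only from $0$, state variables, prefixes $a.\bigoplus_{i=1}^n[q_i]\_$ and $\|$. Multiplicities: $\mathcal M$ is the set of maps $m:\mathcal V\to\mathbb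 N\cup\{\infty\}$; $0$ is the zero map and $1_x$ maps $x$ to $1$ and other variables to $0$. $\mathcal P$ is the set of discrete probability distributions on $\mathcal M$. For probabilistic terms: $\llbracket0\rrbracket_{\mathcal P}=\delta_0$, $\llbracket x\rrbracket_{\mathcal P}=\delta_{1_x}$, $\llbracket t_1\|t_2\rrbracket_{\mathcal P}(m)=\sum\{\llbracket t_1\rrbracket_{\mathcal P}(m_1)\llbracket t_2\rrbracket_{\mathcal P}(m_2)\mid m_1,m_2\in\mathcal M,\ m(x)=m_1(x)+m_2(x)\ \forall x\}$, $\llbracket a.\bigoplus_{i=1}^n[q_i]t_i\rrbracket_{\mathcal P}=\sum_i q_i\llbracket t_i\rrbracket_{\mathcal P}$. $\mathcal E$ is the set of maps $e:\mathcal V\to[0,1)$. $\mathrm{dda}(m,e)=1-\prod_{x\in\mathcal V}(1-e(x))^{m(x)}$ (with $c^\infty=0$ for $0\le c<1$, $1^\infty=1$), and $\mathrm{pda}(p,e)=\sum_{m\in\mathcal M}p(m)\,\mathrm{dda}(m,e)$. For closed substitutions, $\mathbf d(\sigma_1,\sigma_2)\in\mathcal E$ is $x\mapsto\mathbf d(\sigma_1(x),\sigma_2(x))$. *)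

theory Defs
  imports "HOL-Probability.Probability" "HOL-Library.Extended_Nat"
begin

text \<open>Closed terms (processes) T(Sigma). A prefix a.(+)_i [q_i] t_i is represented by
  the list of pairs (t_i, q_i). The constructors are: 0, prefix, +, parallel composition
  with synchronisation set B.\<close>
datatype 'a proc =
    PNil
  | PPre 'a "('a proc \<times> real) list"
  | PCho "'a proc" "'a proc"
  | PPar "'a set" "'a proc" "'a proc"

datatype ('a, 'v) tm =
    TVar 'v
  | TNil
  | TPre 'a "(('a, 'v) tm \<times> real) list"
  | TCho "('a, 'v) tm" "('a, 'v) tm"
  | TPar "'a set" "('a, 'v) tm" "('a, 'v) tm"

text \<open>The prefix operator a.(+)_{i=1}^n [q_i] _ exists only for n >= 1, q_i in (0,1],
  sum q_i = 1.\<close>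
definition wf_weights :: "('x \<times> real) list \<Rightarrow> bool" where
  "wf_weights qs \<longleftrightarrow> qs \<noteq> [] \<and> (\<forall>p\<in>set qs. 0 < snd p \<and> snd p \<le> 1)
     \<and> sum_list (map snd qs) = 1"

fun wf_proc :: "'a proc \<Rightarrow> bool" where
  "wf_proc PNil = True"
| "wf_proc (PPre a qs) = (wf_weights qs \<and> (\<forall>p\<in>set qs. wf_proc (fst p)))"
| "wf_proc (PCho t u) = (wf_proc t \<and> wf_proc u)"
| "wf_proc (PPar B t u) = (wf_proc t \<and> wf_proc u)"

fun wf_tm :: "('a, 'v) tm \<Rightarrow> bool" where
  "wf_tm (TVar x) = True"
| "wf_tm TNil = True"
| "wf_tm (TPre a qs) = (wf_weights qs \<and> (\<forall>p\<in>set qs. wf_tm (fst p)))"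
| "wf_tm (TCho t u) = (wf_tm t \<and> wf_tm u)"
| "wf_tm (TPar B t u) = (wf_tm t \<and> wf_tm u)"

text \<open>Probabilistic process terms: built from 0, variables, prefixes and \<parallel> = \<parallel>_A
  (A = UNIV, the full action set).\<close>
fun ppt :: "('a, 'v) tm \<Rightarrow> bool" where
  "ppt (TVar x) = True"
| "ppt TNil = True"
| "ppt (TPre a qs) = (\<forall>p\<in>set qs. ppt (fst p))"
| "ppt (TCho t u) = False"
| "ppt (TPar B t u) = (B = UNIV \<and> ppt t \<and> ppt u)"

fun subst :: "('v \<Rightarrow> 'a proc) \<Rightarrow> ('a, 'v) tm \<Rightarrow> 'a proc" where
  "subst \<sigma> (TVar x) = \<sigma> x"
| "subst \<sigma> TNil = PNil"
| "subst \<sigma> (TPre a qs) = PPre a (map (\<lambda>p. (subst \<sigma> (fst p), snd p)) qs)"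
| "subst \<sigma> (TCho t u) = PCho (subst \<sigma> t) (subst \<sigma> u)"
| "subst \<sigma> (TPar B t u) = PPar B (subst \<sigma> t) (subst \<sigma> u)"

definition par_pmf :: "'a set \<Rightarrow> 'a proc pmf \<Rightarrow> 'a proc pmf \<Rightarrow> 'a proc pmf" where
  "par_pmf B \<mu>1 \<mu>2 = map_pmf (\<lambda>(x, y). PPar B x y) (pair_pmf \<mu>1 \<mu>2)"

inductive step :: "'a proc \<Rightarrow> 'a \<Rightarrow> 'a proc pmf \<Rightarrow> bool" where
  pre: "wf_weights qs \<Longrightarrow> step (PPre a qs) a (pmf_of_list qs)"
| cho1: "step t1 a \<mu>1 \<Longrightarrow> step (PCho t1 t2) a \<mu>1"
| cho2: "step t2 a \<mu>2 \<Longrightarrow> step (PCho t1 t2) a \<mu>2"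
| sync: "a \<in> B \<Longrightarrow> step t1 a \<mu>1 \<Longrightarrow> step t2 a \<mu>2 \<Longrightarrow>
           step (PPar B t1 t2) a (par_pmf B \<mu>1 \<mu>2)"
| left: "a \<notin> B \<Longrightarrow> step t1 a \<mu>1 \<Longrightarrow>
           step (PPar B t1 t2) a (par_pmf B \<mu>1 (return_pmf t2))"
| right: "a \<notin> B \<Longrightarrow> step t2 a \<mu>2 \<Longrightarrow>
           step (PPar B t1 t2) a (par_pmf B (return_pmf t1) \<mu>2)"

definition der :: "'a proc \<Rightarrow> 'a \<Rightarrow> 'a proc pmf set" where
  "der t a = {\<pi>. step t a \<pi>}"

definition couplings :: "'x pmf \<Rightarrow> 'x pmf \<Rightarrow> ('x \<times> 'x) pmf set" where
  "couplings \<pi> \<pi>' = {\<omega>. map_pmf fst \<omega> = \<pi> \<and> map_pmf snd \<omega> = \<pi>'}"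

text \<open>Kantorovich lifting (the minimum over couplings, written as an infimum).\<close>
definition kantorovich :: "('x \<Rightarrow> 'x \<Rightarrow> real) \<Rightarrow> 'x pmf \<Rightarrow> 'x pmf \<Rightarrow> real" where
  "kantorovich d \<pi> \<pi>' =
     (INF \<omega>\<in>couplings \<pi> \<pi>'. measure_pmf.expectation \<omega> (\<lambda>(t, t'). d t t'))"

definition inf1 :: "real set \<Rightarrow> real" where
  "inf1 S = (if S = {} then 1 else Inf S)"

definition sup0 :: "real set \<Rightarrow> real" where
  "sup0 S = (if S = {} then 0 else Sup S)"

definition hausdorff :: "('y \<Rightarrow> 'y \<Rightarrow> real) \<Rightarrow> 'y set \<Rightarrow> 'y set \<Rightarrow> real" where
  "hausdorff dh P1 P2 =
     max (sup0 ((\<lambda>p1. inf1 ((\<lambda>p2. dh p1 p2) ` P2)) ` P1))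
         (sup0 ((\<lambda>p2. inf1 ((\<lambda>p1. dh p2 p1) ` P1)) ` P2))"

definition bisim_op :: "('a proc \<Rightarrow> 'a proc \<Rightarrow> real) \<Rightarrow> 'a proc \<Rightarrow> 'a proc \<Rightarrow> real" where
  "bisim_op d t t' = sup0 ((\<lambda>a. hausdorff (kantorovich d) (der t a) (der t' a)) ` UNIV)"

definition unit_valued :: "('x \<Rightarrow> 'x \<Rightarrow> real) \<Rightarrow> bool" where
  "unit_valued d \<longleftrightarrow> (\<forall>t t'. 0 \<le> d t t' \<and> d t t' \<le> 1)"

definition bdist :: "'a proc \<Rightarrow> 'a proc \<Rightarrow> real" where
  "bdist = (THE d. unit_valued d \<and> bisim_op d = d \<and>
              (\<forall>d'. unit_valued d' \<and> bisim_op d' = d' \<longrightarrow> d \<le> d'))"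

type_synonym 'v mult = "'v \<Rightarrow> enat"

fun sem :: "('a, 'v) tm \<Rightarrow> 'v mult pmf" where
  "sem (TVar x) = return_pmf (\<lambda>y. if y = x then 1 else 0)"
| "sem TNil = return_pmf (\<lambda>_. 0)"
| "sem (TPre a qs) = bind_pmf (pmf_of_list (map (\<lambda>p. (sem (fst p), snd p)) qs)) id"
| "sem (TCho t u) = return_pmf (\<lambda>_. 0)" \<comment> \<open>not a probabilistic process term; irrelevant\<close>
| "sem (TPar B t u) =
     map_pmf (\<lambda>(m1, m2). \<lambda>x. m1 x + m2 x) (pair_pmf (sem t) (sem u))"

definition epow :: "real \<Rightarrow> enat \<Rightarrow> real" where
  "epow c m = (case m of enat n \<Rightarrow> c ^ n | \<infinity> \<Rightarrow> (if c = 1 then 1 else 0))"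

text \<open>The product over all variables of factors in [0,1] is the infimum of the finite
  partial products.\<close>
definition dda :: "'v mult \<Rightarrow> ('v \<Rightarrow> real) \<Rightarrow> real" where
  "dda m e = 1 - (INF F\<in>{F. finite F}. \<Prod>x\<in>F. epow (1 - e x) (m x))"

definition pda :: "'v mult pmf \<Rightarrow> ('v \<Rightarrow> real) \<Rightarrow> real" where
  "pda p e = measure_pmf.expectation p (\<lambda>m. dda m e)"

end

theory Submission
  imports Defs
begin


lemma integral_bind_pmf_bdd:
  fixes f :: "'b \<Rightarrow> real"
  assumes "\<And>x. \<bar>f x\<bar> \<le> B"
  shows "measure_pmf.expectation (bind_pmf M N) f = measure_pmf.expectation M (\<lambda>x. measure_pmf.expectation (N x) f)"
  unfolding measure_pmf_bind
  apply (rule integral_bind[where K="count_space UNIV" and B=B and B'=1])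
  using assms measurable_measure_pmf[of N]
  by (auto simp: measure_pmf.emeasure_space_1 prob_space_imp_subprob_space measure_pmf.prob_space_axioms intro: measure_pmf.finite_measure_axioms)

lemma expectation_pair_mult:
  fixes f g :: "_ \<Rightarrow> real"
  assumes "\<And>x. \<bar>f x\<bar> \<le> B" "\<And>x. \<bar>g x\<bar> \<le> C"
  shows "measure_pmf.expectation (pair_pmf A D) (\<lambda>(x,y). f x * g y)
     = measure_pmf.expectation A f * measure_pmf.expectation D g"
proof -
  have b1: "\<bar>(\<lambda>(x,y). f x * g y) z\<bar> \<le> B * C" for z
    using assms by (auto simp: abs_mult split: prod.splits intro!: mult_mono) (meson abs_ge_zero order_trans)
  have "measure_pmf.expectation (pair_pmf A D) (\<lambda>(x,y). f x * g y)
     = measure_pmf.expectation A (\<lambda>x. measure_pmf.expectation (bind_pmf D (\<lambda>y. return_pmf (x, y))) (\<lambda>(x,y). f x * g y))"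
    unfolding pair_pmf_def by (rule integral_bind_pmf_bdd[OF b1])
  also have "\<dots> = measure_pmf.expectation A (\<lambda>x. measure_pmf.expectation D (\<lambda>y. f x * g y))"
    by (intro Bochner_Integration.integral_cong refl, subst integral_bind_pmf_bdd[OF b1]) simp
  also have "\<dots> = measure_pmf.expectation A (\<lambda>x. f x * measure_pmf.expectation D g)"
    by simp
  also have "\<dots> = measure_pmf.expectation A f * measure_pmf.expectation D g"
    by simp
  finally show ?thesis .
qed

lemma map_pmf_of_list:
  assumes "pmf_of_list_wf xs"
  shows "map_pmf f (pmf_of_list xs) = pmf_of_list (map (\<lambda>p. (f (fst p), snd p)) xs)"
proof -
  have wf: "pmf_of_list_wf (map (\<lambda>p. (f (fst p), snd p)) xs)"
    using assms by (auto simp: pmf_of_list_wf_def comp_def)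
  show ?thesis
  proof (rule pmf_eqI)
    fix y
    show "pmf (map_pmf f (pmf_of_list xs)) y = pmf (pmf_of_list (map (\<lambda>p. (f (fst p), snd p)) xs)) y"
      unfolding pmf_map measure_pmf_of_list[OF assms] pmf_pmf_of_list[OF wf]
      by (induction xs) auto
  qed
qed

lemma expectation_pmf_of_list:
  fixes f :: "_ \<Rightarrow> real"
  assumes "pmf_of_list_wf xs"
  shows "measure_pmf.expectation (pmf_of_list xs) f = (\<Sum>p\<leftarrow>xs. snd p * f (fst p))"
proof -
  let ?A = "set (map fst xs)"
  have "measure_pmf.expectation (pmf_of_list xs) f = (\<Sum>a\<in>?A. f a * pmf (pmf_of_list xs) a)"
    using set_pmf_of_list[OF assms] by (intro integral_measure_pmf_real) auto
  also have "\<dots> = (\<Sum>a\<in>?A. f a * sum_list (map snd (filter (\<lambda>z. fst z = a) xs)))"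
    by (simp add: pmf_pmf_of_list[OF assms])
  also have "\<dots> = (\<Sum>a\<in>?A. (\<Sum>i=0..<length xs. if fst (xs!i) = a then snd (xs!i) * f a else 0))"
    by (intro sum.cong refl, subst sum_list_map_filter', subst sum_list_sum_nth)
       (auto simp: sum_distrib_left intro!: sum.cong)
  also have "\<dots> = (\<Sum>i=0..<length xs. (\<Sum>a\<in>?A. if fst (xs!i) = a then snd (xs!i) * f a else 0))"
    by (rule sum.swap)
  also have "\<dots> = (\<Sum>i=0..<length xs. snd (xs!i) * f (fst (xs!i)))"
    by (intro sum.cong refl) (auto simp: sum.delta)
  also have "\<dots> = (\<Sum>p\<leftarrow>xs. snd p * f (fst p))"
    by (subst sum_list_sum_nth) simp
  finally show ?thesis .
qed



lemma integrable_bdd: "(\<And>x. \<bar>f x\<bar> \<le> (B::real)) \<Longrightarrow> integrable (measure_pmf M) f"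
  by (rule measure_pmf.integrable_const_bound[where B=B]) auto

lemma exp_range:
  assumes "\<And>x. 0 \<le> f x \<and> f x \<le> (1::real)"
  shows "0 \<le> measure_pmf.expectation M f" "measure_pmf.expectation M f \<le> 1"
proof -
  show "0 \<le> measure_pmf.expectation M f" using assms by (simp add: integral_nonneg_AE)
  have "measure_pmf.expectation M f \<le> measure_pmf.expectation M (\<lambda>_. 1)"
    using assms by (intro integral_mono integrable_bdd[where B=1]) auto
  then show "measure_pmf.expectation M f \<le> 1" by simp
qed

lemma exp_mono:
  assumes "\<And>x. f x \<le> g x" "\<And>x. \<bar>f x\<bar> \<le> (B::real)" "\<And>x. \<bar>g x\<bar> \<le> C"
  shows "measure_pmf.expectation M f \<le> measure_pmf.expectation M g"
  using assms by (intro integral_mono integrable_bdd) auto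

lemma pair_in_couplings: "pair_pmf \<pi> \<pi>' \<in> couplings \<pi> \<pi>'"
  by (simp add: couplings_def map_fst_pair_pmf map_snd_pair_pmf)

lemma unit_valuedD: "unit_valued d \<Longrightarrow> 0 \<le> d x y \<and> d x y \<le> 1"
  by (simp add: unit_valued_def)

lemma expd_range:
  assumes "unit_valued d"
  shows "0 \<le> measure_pmf.expectation \<omega> (\<lambda>(t, t'). d t t')"
        "measure_pmf.expectation \<omega> (\<lambda>(t, t'). d t t') \<le> 1"
  using exp_range[of "\<lambda>(t, t'). d t t'" \<omega>] unit_valuedD[OF assms] by (auto split: prod.splits)

lemma kant_le:
  assumes "unit_valued d" "\<omega> \<in> couplings \<pi> \<pi>'"
  shows "kantorovich d \<pi> \<pi>' \<le> measure_pmf.expectation \<omega> (\<lambda>(t, t'). d t t')"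
  unfolding kantorovich_def
  by (rule cINF_lower[OF _ assms(2)]) (auto intro!: bdd_belowI[where m=0] expd_range[OF assms(1)])

lemma kant_range:
  assumes "unit_valued d"
  shows "0 \<le> kantorovich d \<pi> \<pi>'" "kantorovich d \<pi> \<pi>' \<le> 1"
proof -
  show "0 \<le> kantorovich d \<pi> \<pi>'" unfolding kantorovich_def
    using pair_in_couplings by (intro cINF_greatest) (auto intro: expd_range[OF assms])
  show "kantorovich d \<pi> \<pi>' \<le> 1"
    using kant_le[OF assms pair_in_couplings] expd_range[OF assms] by (meson order_trans)
qed

lemma kant_mono:
  assumes "unit_valued d1" "unit_valued d2" "d1 \<le> d2"
  shows "kantorovich d1 \<pi> \<pi>' \<le> kantorovich d2 \<pi> \<pi>'"
  unfolding kantorovich_def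
proof (rule cINF_mono)
  show "couplings \<pi> \<pi>' \<noteq> {}" using pair_in_couplings by blast
  show "bdd_below ((\<lambda>\<omega>. measure_pmf.expectation \<omega> (\<lambda>(t, t'). d1 t t')) ` couplings \<pi> \<pi>')"
    by (auto intro!: bdd_belowI[where m=0] expd_range[OF assms(1)])
  fix \<omega> assume "\<omega> \<in> couplings \<pi> \<pi>'"
  then show "\<exists>m\<in>couplings \<pi> \<pi>'. measure_pmf.expectation m (\<lambda>(t, t'). d1 t t') \<le> measure_pmf.expectation \<omega> (\<lambda>(t, t'). d2 t t')"
    using assms unit_valuedD[OF assms(1)] unit_valuedD[OF assms(2)]
    by (intro bexI[of _ \<omega>] exp_mono[where B=1 and C=1]) (auto simp: le_fun_def split: prod.splits)
qed

lemma inf1_range: "(\<And>x. x \<in> P \<Longrightarrow> 0 \<le> f x \<and> f x \<le> 1) \<Longrightarrow> 0 \<le> inf1 (f ` P) \<and> inf1 (f ` P) \<le> 1"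
  unfolding inf1_def
  apply (cases "P = {}")
   apply simp
  apply (auto intro!: cINF_greatest)
  apply (metis all_not_in_conv bdd_belowI2 cINF_lower order_trans)
  done

lemma sup0_range: "(\<And>x. x \<in> P \<Longrightarrow> 0 \<le> f x \<and> f x \<le> 1) \<Longrightarrow> 0 \<le> sup0 (f ` P) \<and> sup0 (f ` P) \<le> 1"
  unfolding sup0_def
  apply (cases "P = {}")
   apply simp
  apply (auto intro!: cSUP_least)
  apply (metis all_not_in_conv bdd_aboveI2 cSUP_upper order_trans)
  done

lemma inf1_mono: "(\<And>x. x \<in> P \<Longrightarrow> 0 \<le> f x \<and> f x \<le> g x) \<Longrightarrow> inf1 (f ` P) \<le> inf1 (g ` P)"
  unfolding inf1_def
  apply (cases "P = {}")
   apply simp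
  apply simp
  apply (rule cINF_mono)
    apply (auto intro!: bdd_belowI2[where m=0])
  done

lemma sup0_mono: "(\<And>x. x \<in> P \<Longrightarrow> f x \<le> g x \<and> g x \<le> 1) \<Longrightarrow> sup0 (f ` P) \<le> sup0 (g ` P)"
  unfolding sup0_def
  apply (cases "P = {}")
   apply simp
  apply simp
  apply (rule cSUP_mono)
    apply (auto intro!: bdd_aboveI2[where M=1])
  done

lemma inf1_le: "x \<in> P \<Longrightarrow> (\<And>x. x \<in> P \<Longrightarrow> 0 \<le> f x) \<Longrightarrow> inf1 (f ` P) \<le> f x"
  unfolding inf1_def by (auto intro!: cINF_lower bdd_belowI2[where m=0])

lemma sup0_ge: "x \<in> P \<Longrightarrow> (\<And>x. x \<in> P \<Longrightarrow> f x \<le> 1) \<Longrightarrow> f x \<le> sup0 (f ` P)"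
  unfolding sup0_def by (auto intro!: cSUP_upper bdd_aboveI2[where M=1])

lemma sup0_le: "(\<And>x. x \<in> P \<Longrightarrow> f x \<le> c) \<Longrightarrow> 0 \<le> c \<Longrightarrow> sup0 (f ` P) \<le> c"
  unfolding sup0_def by (auto intro!: cSUP_least)

lemma hausdorff_range:
  assumes "\<And>x y. 0 \<le> dh x y \<and> dh x y \<le> 1"
  shows "0 \<le> hausdorff dh P Q \<and> hausdorff dh P Q \<le> 1"
  unfolding hausdorff_def using assms
  by (auto intro!: sup0_range inf1_range simp: max_def)

lemma hausdorff_mono:
  assumes "\<And>x y. 0 \<le> dh x y \<and> dh x y \<le> dh' x y" "\<And>x y. dh' x y \<le> 1"
  shows "hausdorff dh P Q \<le> hausdorff dh' P Q"
proof -
  have r: "0 \<le> dh' x y" for x y using assms(1)[of x y] by linarith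
  show ?thesis
  unfolding hausdorff_def
  apply (rule max.mono)
   apply (rule sup0_mono, rule conjI, rule inf1_mono, use assms in auto)
   apply (rule conjunct2[OF inf1_range], use assms r in auto)
  apply (rule sup0_mono, rule conjI, rule inf1_mono, use assms in auto)
  apply (rule conjunct2[OF inf1_range], use assms r in auto)
  done
qed

lemma bisim_range:
  assumes "unit_valued d"
  shows "unit_valued (bisim_op d)"
  unfolding unit_valued_def bisim_op_def
  using kant_range[OF assms] by (auto intro!: sup0_range hausdorff_range)

lemma bisim_mono:
  assumes "unit_valued d1" "unit_valued d2" "d1 \<le> d2"
  shows "bisim_op d1 \<le> bisim_op d2"
  unfolding le_fun_def bisim_op_def
  using kant_range[OF assms(1)] kant_range[OF assms(2)] kant_mono[OF assms]
  by (auto intro!: sup0_mono hausdorff_mono conjunct2[OF hausdorff_range])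

definition lfpd :: "'a proc \<Rightarrow> 'a proc \<Rightarrow> real" where
  "lfpd t t' = Inf ((\<lambda>d. d t t') ` {d. unit_valued d \<and> bisim_op d \<le> d})"

lemma one_pre: "(\<lambda>_ _. 1) \<in> {d. unit_valued d \<and> bisim_op d \<le> d}"
  unfolding mem_Collect_eq
proof
  show uv: "unit_valued (\<lambda>_ _. 1)" by (simp add: unit_valued_def)
  show "bisim_op (\<lambda>_ _. 1) \<le> (\<lambda>_ _. 1)"
    using bisim_range[OF uv] by (auto simp: unit_valued_def le_fun_def)
qed

lemma pre_ne: "{d. unit_valued d \<and> bisim_op d \<le> d} \<noteq> {}" using one_pre by blast

lemma lfpd_le: "unit_valued d \<Longrightarrow> bisim_op d \<le> d \<Longrightarrow> lfpd \<le> d"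
  unfolding le_fun_def lfpd_def
  by (auto intro!: cINF_lower bdd_belowI2[where m=0] simp: unit_valued_def)

lemma lfpd_uv: "unit_valued (lfpd :: 'a proc \<Rightarrow> _)"
  unfolding unit_valued_def
proof (intro allI conjI)
  fix t t' :: "'a proc"
  show "0 \<le> lfpd t t'" unfolding lfpd_def
    using pre_ne unfolding unit_valued_def by (intro cINF_greatest) auto
  have "lfpd t t' \<le> (\<lambda>_ _. 1) t t'" unfolding lfpd_def
    by (rule cINF_lower[OF _ one_pre]) (auto intro!: bdd_belowI2[where m=0] simp: unit_valued_def)
  then show "lfpd t t' \<le> 1" by simp
qed

lemma lfpd_pre: "bisim_op (lfpd :: 'a proc \<Rightarrow> _) \<le> lfpd"
proof -
  have "bisim_op lfpd t t' \<le> lfpd t t'" for t t' :: "'a proc" 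
    unfolding lfpd_def[of t t']
  proof (rule cINF_greatest)
    show "{d. unit_valued d \<and> bisim_op d \<le> d} \<noteq> {}" using one_pre by blast
    fix d :: "'a proc \<Rightarrow> 'a proc \<Rightarrow> real" assume d: "d \<in> {d. unit_valued d \<and> bisim_op d \<le> d}"
    have "bisim_op lfpd \<le> bisim_op d" using d lfpd_le lfpd_uv bisim_mono by blast
    also have "\<dots> \<le> d" using d by blast
    finally show "bisim_op lfpd t t' \<le> d t t'" by (simp add: le_fun_def)
  qed
  then show ?thesis by (simp add: le_fun_def)
qed

lemma lfpd_fix: "bisim_op lfpd = lfpd"
proof -
  have "lfpd \<le> bisim_op lfpd"
    using lfpd_le[OF bisim_range[OF lfpd_uv]] bisim_mono[OF bisim_range[OF lfpd_uv] lfpd_uv lfpd_pre]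
    by blast
  then show ?thesis using lfpd_pre by (rule antisym[rotated])
qed

lemma bdist_eq: "bdist = lfpd"
  unfolding bdist_def
proof (rule the_equality)
  show "unit_valued lfpd \<and> bisim_op lfpd = lfpd \<and> (\<forall>d'. unit_valued d' \<and> bisim_op d' = d' \<longrightarrow> lfpd \<le> d')"
    using lfpd_uv lfpd_fix lfpd_le by (metis order_refl)
  fix d assume "unit_valued d \<and> bisim_op d = d \<and> (\<forall>d'. unit_valued d' \<and> bisim_op d' = d' \<longrightarrow> d \<le> d')"
  then have "unit_valued d" "bisim_op d = d" "d \<le> lfpd" using lfpd_uv lfpd_fix by auto
  then show "d = lfpd" using lfpd_le[of d] by (intro antisym) auto
qed

lemma bdist_uv: "unit_valued bdist" and bdist_fix: "bisim_op bdist = bdist"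
  and bdist_le: "unit_valued d \<Longrightarrow> bisim_op d \<le> d \<Longrightarrow> bdist \<le> d"
  using lfpd_uv lfpd_fix lfpd_le by (auto simp: bdist_eq)



lemma swap_coupling: "\<omega> \<in> couplings \<pi> \<pi>' \<Longrightarrow> map_pmf prod.swap \<omega> \<in> couplings \<pi>' \<pi>"
  unfolding couplings_def by (auto simp: map_pmf_comp)

lemma couplings_swap_eq: "couplings \<pi>' \<pi> = map_pmf prod.swap ` couplings \<pi> \<pi>'"
proof
  show "map_pmf prod.swap ` couplings \<pi> \<pi>' \<subseteq> couplings \<pi>' \<pi>" using swap_coupling by blast
  show "couplings \<pi>' \<pi> \<subseteq> map_pmf prod.swap ` couplings \<pi> \<pi>'"
  proof
    fix \<omega> assume "\<omega> \<in> couplings \<pi>' \<pi>"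
    then have "map_pmf prod.swap \<omega> \<in> couplings \<pi> \<pi>'" by (rule swap_coupling)
    moreover have "\<omega> = map_pmf prod.swap (map_pmf prod.swap \<omega>)" by (simp add: map_pmf_comp)
    ultimately show "\<omega> \<in> map_pmf prod.swap ` couplings \<pi> \<pi>'" by blast
  qed
qed

lemma kant_flip: "kantorovich (\<lambda>x y. d y x) \<pi> \<pi>' = kantorovich d \<pi>' \<pi>"
proof -
  have f: "(\<lambda>x. (case prod.swap x of (t, t') \<Rightarrow> d t t')) = (\<lambda>(t, t'). d t' t)"
    by (auto simp: fun_eq_iff)
  have "(\<lambda>\<omega>. measure_pmf.expectation \<omega> (\<lambda>(t, t'). d t t')) ` couplings \<pi>' \<pi>
      = (\<lambda>\<omega>. measure_pmf.expectation \<omega> (\<lambda>(t, t'). d t' t)) ` couplings \<pi> \<pi>'"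
    unfolding couplings_swap_eq[of \<pi>' \<pi>] image_comp comp_def integral_map_pmf f ..
  then show ?thesis unfolding kantorovich_def by simp
qed

lemma hausdorff_sym: "hausdorff dh P Q = hausdorff dh Q P"
  unfolding hausdorff_def by (rule max.commute)

lemma bisim_sym: "bisim_op d t t' = bisim_op d t' t"
  unfolding bisim_op_def hausdorff_sym[of _ "der t _"] ..

lemma bdist_sym: "bdist t t' = bdist t' t"
  using bisim_sym[of bdist t t'] unfolding bdist_fix .



lemma fmono:
  fixes a b a' b' :: real
  assumes "a \<le> a'" "b \<le> b'" "a' \<le> 1" "b' \<le> 1"
  shows "1 - (1 - a) * (1 - b) \<le> 1 - (1 - a') * (1 - b')"
proof -
  have "(1 - a') * (1 - b') \<le> (1 - a) * (1 - b)"
    using assms by (intro mult_mono) auto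
  then show ?thesis by simp
qed

lemma inf_comb:
  fixes S1 S2 :: "real set"
  assumes ne: "S1 \<noteq> {}" "S2 \<noteq> {}" and r1: "\<And>a. a \<in> S1 \<Longrightarrow> 0 \<le> a \<and> a \<le> 1"
    and r2: "\<And>b. b \<in> S2 \<Longrightarrow> 0 \<le> b \<and> b \<le> 1"
    and h: "\<And>a b. a \<in> S1 \<Longrightarrow> b \<in> S2 \<Longrightarrow> c \<le> 1 - (1-a)*(1-b)"
  shows "c \<le> 1 - (1 - Inf S1) * (1 - Inf S2)"
proof (rule field_le_epsilon)
  fix e :: real assume e: "0 < e"
  have bdd1: "bdd_below S1" using r1 by (intro bdd_belowI[where m=0]) auto
  have bdd2: "bdd_below S2" using r2 by (intro bdd_belowI[where m=0]) auto
  have I1: "0 \<le> Inf S1" using r1 ne by (intro cInf_greatest) auto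
  have I2: "0 \<le> Inf S2" using r2 ne by (intro cInf_greatest) auto
  have "Inf S1 < Inf S1 + e/2" using e by simp
  then obtain a where a: "a \<in> S1" "a < Inf S1 + e/2" using cInf_less_iff[OF ne(1) bdd1] by blast
  have "Inf S2 < Inf S2 + e/2" using e by simp
  then obtain b where b: "b \<in> S2" "b < Inf S2 + e/2" using cInf_less_iff[OF ne(2) bdd2] by blast
  have la: "Inf S1 \<le> a" using a bdd1 by (intro cInf_lower)
  have lb: "Inf S2 \<le> b" using b bdd2 by (intro cInf_lower)
  have m: "Inf S1 * Inf S2 \<le> a * b" using la lb I1 I2 by (intro mult_mono) auto
  have "c \<le> 1 - (1-a)*(1-b)" using h a b by blast
  also have "\<dots> = a + b - a * b" by (simp add: algebra_simps)
  also have "\<dots> \<le> Inf S1 + Inf S2 - Inf S1 * Inf S2 + (a - Inf S1) + (b - Inf S2)" using m by simp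
  also have "\<dots> \<le> 1 - (1 - Inf S1) * (1 - Inf S2) + e" using a(2) b(2) by (simp add: algebra_simps)
  finally show "c \<le> 1 - (1 - Inf S1) * (1 - Inf S2) + e" .
qed

lemma exp_one_minus:
  fixes h :: "_ \<Rightarrow> real"
  assumes "\<And>x. \<bar>h x\<bar> \<le> B"
  shows "measure_pmf.expectation M (\<lambda>x. 1 - h x) = 1 - measure_pmf.expectation M h"
  using assms by (subst Bochner_Integration.integral_diff) (auto intro: integrable_bdd)

lemma kant_par:
  assumes uv: "unit_valued d"
   and hyp: "\<And>x y x' y'. d (PPar B x y) (PPar B x' y') \<le> 1 - (1 - d x x') * (1 - d y y')"
  shows "kantorovich d (par_pmf B \<pi>1 \<pi>2) (par_pmf B \<pi>1' \<pi>2')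
     \<le> 1 - (1 - kantorovich d \<pi>1 \<pi>1') * (1 - kantorovich d \<pi>2 \<pi>2')"
proof -
  let ?E = "\<lambda>\<omega>. measure_pmf.expectation \<omega> (\<lambda>(t, t'). d t t')"
  have e1: "kantorovich d \<pi>1 \<pi>1' = Inf (?E ` couplings \<pi>1 \<pi>1')" by (simp add: kantorovich_def)
  have e2: "kantorovich d \<pi>2 \<pi>2' = Inf (?E ` couplings \<pi>2 \<pi>2')" by (simp add: kantorovich_def)
  have d01: "0 \<le> d x y" "d x y \<le> 1" for x y using unit_valuedD[OF uv] by auto
  show ?thesis unfolding e1 e2
  proof (rule inf_comb)
    show "?E ` couplings \<pi>1 \<pi>1' \<noteq> {}" "?E ` couplings \<pi>2 \<pi>2' \<noteq> {}" using pair_in_couplings by blast+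
    show "\<And>a. a \<in> ?E ` couplings \<pi>1 \<pi>1' \<Longrightarrow> 0 \<le> a \<and> a \<le> 1"
         "\<And>a. a \<in> ?E ` couplings \<pi>2 \<pi>2' \<Longrightarrow> 0 \<le> a \<and> a \<le> 1"
      using expd_range[OF uv] by auto
    fix a b assume a: "a \<in> ?E ` couplings \<pi>1 \<pi>1'" and b: "b \<in> ?E ` couplings \<pi>2 \<pi>2'"
    then obtain \<omega>1 \<omega>2 where w1: "\<omega>1 \<in> couplings \<pi>1 \<pi>1'" "a = ?E \<omega>1"
      and w2: "\<omega>2 \<in> couplings \<pi>2 \<pi>2'" "b = ?E \<omega>2" by blast
    define g where "g = (\<lambda>(z :: ('a proc \<times> 'a proc) \<times> ('a proc \<times> 'a proc)).
        (PPar B (fst (fst z)) (fst (snd z)), PPar B (snd (fst z)) (snd (snd z))))"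
    define \<omega> where "\<omega> = map_pmf g (pair_pmf \<omega>1 \<omega>2)"
    have "map_pmf fst \<omega> = par_pmf B \<pi>1 \<pi>2"
      using w1(1) w2(1)
      unfolding \<omega>_def couplings_def par_pmf_def
      by (auto simp: map_pmf_comp map_pair[symmetric] g_def case_prod_unfold)
    moreover have "map_pmf snd \<omega> = par_pmf B \<pi>1' \<pi>2'"
      using w1(1) w2(1)
      unfolding \<omega>_def couplings_def par_pmf_def
      by (auto simp: map_pmf_comp map_pair[symmetric] g_def case_prod_unfold)
    ultimately have wc: "\<omega> \<in> couplings (par_pmf B \<pi>1 \<pi>2) (par_pmf B \<pi>1' \<pi>2')"
      by (simp add: couplings_def)
    have "kantorovich d (par_pmf B \<pi>1 \<pi>2) (par_pmf B \<pi>1' \<pi>2') \<le> ?E \<omega>"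
      by (rule kant_le[OF uv wc])
    also have "\<dots> = measure_pmf.expectation (pair_pmf \<omega>1 \<omega>2)
         (\<lambda>z. d (PPar B (fst (fst z)) (fst (snd z))) (PPar B (snd (fst z)) (snd (snd z))))"
      unfolding \<omega>_def integral_map_pmf g_def by (simp add: case_prod_unfold)
    also have "\<dots> \<le> measure_pmf.expectation (pair_pmf \<omega>1 \<omega>2)
         (\<lambda>z. 1 - (1 - d (fst (fst z)) (snd (fst z))) * (1 - d (fst (snd z)) (snd (snd z))))"
    proof (rule exp_mono[where B=1 and C=1])
      fix z :: "('a proc \<times> 'a proc) \<times> ('a proc \<times> 'a proc)"
      show "d (PPar B (fst (fst z)) (fst (snd z))) (PPar B (snd (fst z)) (snd (snd z)))
          \<le> 1 - (1 - d (fst (fst z)) (snd (fst z))) * (1 - d (fst (snd z)) (snd (snd z)))"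
        by (rule hyp)
      show "\<bar>d (PPar B (fst (fst z)) (fst (snd z))) (PPar B (snd (fst z)) (snd (snd z)))\<bar> \<le> 1"
        using d01 by (simp add: abs_le_iff)
      have "0 \<le> (1 - d (fst (fst z)) (snd (fst z))) * (1 - d (fst (snd z)) (snd (snd z)))"
        "(1 - d (fst (fst z)) (snd (fst z))) * (1 - d (fst (snd z)) (snd (snd z))) \<le> 1"
        using d01 by (auto intro!: mult_nonneg_nonneg mult_le_one)
      then show "\<bar>1 - (1 - d (fst (fst z)) (snd (fst z))) * (1 - d (fst (snd z)) (snd (snd z)))\<bar> \<le> 1"
        by linarith
    qed
    also have "\<dots> = 1 - measure_pmf.expectation (pair_pmf \<omega>1 \<omega>2)
         (\<lambda>z. (1 - d (fst (fst z)) (snd (fst z))) * (1 - d (fst (snd z)) (snd (snd z))))"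
      by (rule exp_one_minus[where B=1]) (use d01 in \<open>auto simp: abs_mult intro!: mult_le_one\<close>)
    also have "measure_pmf.expectation (pair_pmf \<omega>1 \<omega>2)
         (\<lambda>z. (1 - d (fst (fst z)) (snd (fst z))) * (1 - d (fst (snd z)) (snd (snd z))))
       = measure_pmf.expectation (pair_pmf \<omega>1 \<omega>2)
         (\<lambda>(x,y). (\<lambda>(t,t'). 1 - d t t') x * (\<lambda>(t,t'). 1 - d t t') y)"
      by (simp add: case_prod_unfold)
    also have "\<dots> = measure_pmf.expectation \<omega>1 (\<lambda>(t,t'). 1 - d t t') * measure_pmf.expectation \<omega>2 (\<lambda>(t,t'). 1 - d t t')"
      by (rule expectation_pair_mult[where B=1 and C=1]) (use d01 in \<open>auto split: prod.splits\<close>)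
    also have "measure_pmf.expectation \<omega>1 (\<lambda>(t,t'). 1 - d t t') = 1 - a"
      using exp_one_minus[of "\<lambda>(t,t'). d t t'" 1 \<omega>1] d01 w1(2) by (auto simp: case_prod_unfold)
    also have "measure_pmf.expectation \<omega>2 (\<lambda>(t,t'). 1 - d t t') = 1 - b"
      using exp_one_minus[of "\<lambda>(t,t'). d t t'" 1 \<omega>2] d01 w2(2) by (auto simp: case_prod_unfold)
    finally show "kantorovich d (par_pmf B \<pi>1 \<pi>2) (par_pmf B \<pi>1' \<pi>2') \<le> 1 - (1 - a) * (1 - b)" .
  qed
qed



lemma wf_weights_map: "wf_weights (map (\<lambda>x. (f (fst x), snd x)) ws) = wf_weights ws"
  by (auto simp: wf_weights_def comp_def)

lemma wf_weights_wf: "wf_weights ws \<Longrightarrow> pmf_of_list_wf ws"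
  by (auto simp: wf_weights_def pmf_of_list_wf_def)

lemma kant_list:
  assumes uv: "unit_valued d" and wf: "pmf_of_list_wf ws"
  shows "kantorovich d (pmf_of_list (map (\<lambda>x. (f (fst x), snd x)) ws))
                       (pmf_of_list (map (\<lambda>x. (g (fst x), snd x)) ws))
        \<le> (\<Sum>x\<leftarrow>ws. snd x * d (f (fst x)) (g (fst x)))"
proof -
  define L where "L = map (\<lambda>x. ((f (fst x), g (fst x)), snd x)) ws"
  have wfL: "pmf_of_list_wf L" using wf by (auto simp: L_def pmf_of_list_wf_def comp_def)
  have "pmf_of_list L \<in> couplings (pmf_of_list (map (\<lambda>x. (f (fst x), snd x)) ws))
                       (pmf_of_list (map (\<lambda>x. (g (fst x), snd x)) ws))"
    unfolding couplings_def using map_pmf_of_list[OF wfL, of fst] map_pmf_of_list[OF wfL, of snd]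
    by (simp add: L_def comp_def)
  then have "kantorovich d (pmf_of_list (map (\<lambda>x. (f (fst x), snd x)) ws))
                       (pmf_of_list (map (\<lambda>x. (g (fst x), snd x)) ws))
     \<le> measure_pmf.expectation (pmf_of_list L) (\<lambda>(t, t'). d t t')"
    by (rule kant_le[OF uv])
  also have "\<dots> = (\<Sum>x\<leftarrow>ws. snd x * d (f (fst x)) (g (fst x)))"
    unfolding expectation_pmf_of_list[OF wfL] by (simp add: L_def comp_def)
  finally show ?thesis .
qed

lemma der_nil: "der PNil a = {}"
  unfolding der_def by (auto elim: step.cases)

lemma der_pre: "der (PPre b qs) a = (if a = b \<and> wf_weights qs then {pmf_of_list qs} else {})"
  unfolding der_def by (auto elim: step.cases intro: step.pre)

lemma der_par: "der (PPar UNIV p q) a = (\<lambda>(x,y). par_pmf UNIV x y) ` (der p a \<times> der q a)"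
  unfolding der_def by (auto elim: step.cases intro: step.sync)

lemma half_prod:
  fixes dh :: "'x \<Rightarrow> 'x \<Rightarrow> real"
  assumes rng: "\<And>x y. 0 \<le> dh x y \<and> dh x y \<le> 1"
   and h1: "sup0 ((\<lambda>p. inf1 (dh p ` Q1)) ` P1) \<le> b1" "b1 < 1"
   and h2: "sup0 ((\<lambda>p. inf1 (dh p ` Q2)) ` P2) \<le> b2" "b2 < 1"
   and comb: "\<And>p1 p2 q1 q2. dh (c p1 p2) (c q1 q2) \<le> 1 - (1 - dh p1 q1) * (1 - dh p2 q2)"
  shows "sup0 ((\<lambda>p. inf1 (dh p ` (case_prod c ` (Q1 \<times> Q2)))) ` (case_prod c ` (P1 \<times> P2)))
         \<le> 1 - (1-b1)*(1-b2)"
proof (rule sup0_le)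
  have b0: "0 \<le> b1" "0 \<le> b2"
  proof -
    have "0 \<le> sup0 ((\<lambda>p. inf1 (dh p ` Q1)) ` P1)" using rng by (intro conjunct1[OF sup0_range] inf1_range) auto
    then show "0 \<le> b1" using h1 by linarith
    have "0 \<le> sup0 ((\<lambda>p. inf1 (dh p ` Q2)) ` P2)" using rng by (intro conjunct1[OF sup0_range] inf1_range) auto
    then show "0 \<le> b2" using h2 by linarith
  qed
  show "0 \<le> 1 - (1-b1)*(1-b2)" using b0 h1 h2 by (simp add: mult_le_one)
  fix p assume "p \<in> case_prod c ` (P1 \<times> P2)"
  then obtain p1 p2 where p: "p = c p1 p2" "p1 \<in> P1" "p2 \<in> P2" by auto
  have i1: "inf1 (dh p1 ` Q1) \<le> b1"
    using sup0_ge[of p1 P1 "\<lambda>p. inf1 (dh p ` Q1)"] p(2) h1 rng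
    by (meson inf1_range order_trans)
  have i2: "inf1 (dh p2 ` Q2) \<le> b2"
    using sup0_ge[of p2 P2 "\<lambda>p. inf1 (dh p ` Q2)"] p(3) h2 rng
    by (meson inf1_range order_trans)
  have ne1: "Q1 \<noteq> {}" using i1 h1 by (auto simp: inf1_def)
  have ne2: "Q2 \<noteq> {}" using i2 h2 by (auto simp: inf1_def)
  have I1: "inf1 (dh p1 ` Q1) = Inf (dh p1 ` Q1)" using ne1 by (simp add: inf1_def)
  have I2: "inf1 (dh p2 ` Q2) = Inf (dh p2 ` Q2)" using ne2 by (simp add: inf1_def)
  have nec: "case_prod c ` (Q1 \<times> Q2) \<noteq> {}" using ne1 ne2 by auto
  have "Inf (dh p ` (case_prod c ` (Q1 \<times> Q2))) \<le> 1 - (1 - Inf (dh p1 ` Q1)) * (1 - Inf (dh p2 ` Q2))"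
  proof (rule inf_comb)
    show "dh p1 ` Q1 \<noteq> {}" "dh p2 ` Q2 \<noteq> {}" using ne1 ne2 by auto
    show "\<And>a. a \<in> dh p1 ` Q1 \<Longrightarrow> 0 \<le> a \<and> a \<le> 1" "\<And>a. a \<in> dh p2 ` Q2 \<Longrightarrow> 0 \<le> a \<and> a \<le> 1"
      using rng by auto
    fix a b assume "a \<in> dh p1 ` Q1" "b \<in> dh p2 ` Q2"
    then obtain q1 q2 where q: "q1 \<in> Q1" "q2 \<in> Q2" "a = dh p1 q1" "b = dh p2 q2" by auto
    have "Inf (dh p ` (case_prod c ` (Q1 \<times> Q2))) \<le> dh p (c q1 q2)"
      using q rng by (intro cInf_lower bdd_belowI2[where m=0]) auto
    also have "\<dots> \<le> 1 - (1 - a) * (1 - b)" using comb q p by simp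
    finally show "Inf (dh p ` (case_prod c ` (Q1 \<times> Q2))) \<le> 1 - (1 - a) * (1 - b)" .
  qed
  also have "\<dots> \<le> 1 - (1-b1)*(1-b2)"
    using i1 i2 I1 I2 h1 h2 by (intro fmono) auto
  finally show "inf1 (dh p ` (case_prod c ` (Q1 \<times> Q2))) \<le> 1 - (1-b1)*(1-b2)"
    using nec by (simp add: inf1_def)
qed

lemma hausdorff_prod:
  fixes dh :: "'x \<Rightarrow> 'x \<Rightarrow> real"
  assumes rng: "\<And>x y. 0 \<le> dh x y \<and> dh x y \<le> 1"
   and h1: "hausdorff dh P1 Q1 \<le> b1" "b1 < 1"
   and h2: "hausdorff dh P2 Q2 \<le> b2" "b2 < 1"
   and comb: "\<And>p1 p2 q1 q2. dh (c p1 p2) (c q1 q2) \<le> 1 - (1 - dh p1 q1) * (1 - dh p2 q2)"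
  shows "hausdorff dh (case_prod c ` (P1 \<times> P2)) (case_prod c ` (Q1 \<times> Q2)) \<le> 1 - (1-b1)*(1-b2)"
  unfolding hausdorff_def max.bounded_iff
proof
  show "sup0 ((\<lambda>p. inf1 (dh p ` (case_prod c ` (Q1 \<times> Q2)))) ` (case_prod c ` (P1 \<times> P2))) \<le> 1 - (1-b1)*(1-b2)"
    by (rule half_prod[where dh=dh and c=c])
       (use rng comb h1 h2 in \<open>auto simp: hausdorff_def\<close>)
  show "sup0 ((\<lambda>p. inf1 (dh p ` (case_prod c ` (P1 \<times> P2)))) ` (case_prod c ` (Q1 \<times> Q2))) \<le> 1 - (1-b1)*(1-b2)"
    by (rule half_prod[where dh=dh and c=c])
       (use rng comb h1 h2 in \<open>auto simp: hausdorff_def\<close>)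
qed



datatype 'a ptree = Lf "'a proc" "'a proc" | Nl | Pr 'a "('a ptree \<times> real) list" | Pa "'a ptree" "'a ptree"

fun lft :: "'a ptree \<Rightarrow> 'a proc" where
  "lft (Lf p q) = p"
| "lft Nl = PNil"
| "lft (Pr a ws) = PPre a (map (\<lambda>x. (lft (fst x), snd x)) ws)"
| "lft (Pa T U) = PPar UNIV (lft T) (lft U)"

fun rgt :: "'a ptree \<Rightarrow> 'a proc" where
  "rgt (Lf p q) = q"
| "rgt Nl = PNil"
| "rgt (Pr a ws) = PPre a (map (\<lambda>x. (rgt (fst x), snd x)) ws)"
| "rgt (Pa T U) = PPar UNIV (rgt T) (rgt U)"

fun swp :: "'a ptree \<Rightarrow> 'a ptree" where
  "swp (Lf p q) = Lf q p"
| "swp Nl = Nl"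
| "swp (Pr a ws) = Pr a (map (\<lambda>x. (swp (fst x), snd x)) ws)"
| "swp (Pa T U) = Pa (swp T) (swp U)"

fun bnd :: "'a ptree \<Rightarrow> real" where
  "bnd (Lf p q) = bdist p q"
| "bnd Nl = 0"
| "bnd (Pr a ws) = sum_list (map (\<lambda>x. snd x * bnd (fst x)) ws)"
| "bnd (Pa T U) = 1 - (1 - bnd T) * (1 - bnd U)"

fun wft :: "'a ptree \<Rightarrow> bool" where
  "wft (Lf p q) = (bdist p q < 1)"
| "wft Nl = True"
| "wft (Pr a ws) = (wf_weights ws \<and> (\<forall>x\<in>set ws. wft (fst x)))"
| "wft (Pa T U) = (wft T \<and> wft U)"

lemma swp_props: "lft (swp T) = rgt T \<and> rgt (swp T) = lft T \<and> bnd (swp T) = bnd T \<and> wft (swp T) = wft T"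
proof (induction T)
  case (Lf p q) then show ?case by (simp add: bdist_sym)
next
  case Nl then show ?case by simp
next
  case (Pr a ws)
  have m1: "map (\<lambda>x. (lft (swp (fst x)), snd x)) ws = map (\<lambda>x. (rgt (fst x), snd x)) ws"
    and m2: "map (\<lambda>x. (rgt (swp (fst x)), snd x)) ws = map (\<lambda>x. (lft (fst x), snd x)) ws"
    and m3: "map (\<lambda>x. snd x * bnd (swp (fst x))) ws = map (\<lambda>x. snd x * bnd (fst x)) ws"
    using Pr.IH by (auto intro!: map_cong simp: snds.intros fsts.intros)
  have m4: "wf_weights (map (\<lambda>x. (swp (fst x), snd x)) ws) = wf_weights ws"
    by (rule wf_weights_map)
  have m5: "(\<forall>x\<in>set (map (\<lambda>x. (swp (fst x), snd x)) ws). wft (fst x)) = (\<forall>x\<in>set ws. wft (fst x))"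
    using Pr.IH by (auto simp: fsts.intros)
  show ?case
    unfolding swp.simps lft.simps rgt.simps bnd.simps wft.simps m4 m5
    by (simp only: map_map comp_def fst_conv snd_conv m1 m2 m3)
next
  case (Pa T U) then show ?case by simp
qed

lemma sum_list_less:
  fixes f g :: "'x \<Rightarrow> real"
  assumes "ws \<noteq> []" "\<And>x. x \<in> set ws \<Longrightarrow> f x < g x"
  shows "sum_list (map f ws) < sum_list (map g ws)"
  using assms
proof (induction ws)
  case Nil then show ?case by simp
next
  case (Cons w ws)
  show ?case
  proof (cases "ws = []")
    case True then show ?thesis using Cons by simp
  next
    case False
    then have "sum_list (map f ws) < sum_list (map g ws)" using Cons by simp
    then show ?thesis using Cons.prems by simp (smt (verit) list.set_intros(1))
  qed
qed

lemma bnd_range: "wft T \<Longrightarrow> 0 \<le> bnd T \<and> bnd T < 1"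
proof (induction T)
  case (Lf p q) then show ?case using unit_valuedD[OF bdist_uv, of p q] by simp
next
  case Nl then show ?case by simp
next
  case (Pr a ws)
  have w: "ws \<noteq> []" "\<And>x. x \<in> set ws \<Longrightarrow> 0 < snd x \<and> snd x \<le> 1" "sum_list (map snd ws) = 1"
    using Pr.prems by (auto simp: wf_weights_def)
  have ih: "\<And>x. x \<in> set ws \<Longrightarrow> 0 \<le> bnd (fst x) \<and> bnd (fst x) < 1"
    using Pr by (auto simp: fsts.intros)
  have "0 \<le> sum_list (map (\<lambda>x. snd x * bnd (fst x)) ws)"
    using w ih by (intro sum_list_nonneg) (fastforce intro: mult_nonneg_nonneg)
  moreover have "sum_list (map (\<lambda>x. snd x * bnd (fst x)) ws) < sum_list (map snd ws)"
    using w ih by (intro sum_list_less) auto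
  ultimately show ?case using w by simp
next
  case (Pa T U)
  then have "0 \<le> bnd T" "bnd T < 1" "0 \<le> bnd U" "bnd U < 1" by auto
  then show ?case by (simp add: mult_le_one mult_pos_pos)
qed

definition dd :: "'a proc \<Rightarrow> 'a proc \<Rightarrow> real" where
  "dd p q = Inf (insert 1 (bnd ` {T. wft T \<and> lft T = p \<and> rgt T = q}))"

lemma dd_bdd: "bdd_below (insert 1 (bnd ` {T. wft T \<and> lft T = p \<and> rgt T = q}))"
  using bnd_range by (intro bdd_belowI[where m=0]) fastforce

lemma dd_uv: "unit_valued dd"
  unfolding unit_valued_def dd_def
proof (intro allI conjI)
  fix p q :: "'a proc"
  show "0 \<le> Inf (insert 1 (bnd ` {T. wft T \<and> lft T = p \<and> rgt T = q}))"
    using bnd_range by (intro cInf_greatest) fastforce+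
  show "Inf (insert 1 (bnd ` {T. wft T \<and> lft T = p \<and> rgt T = q})) \<le> 1"
    by (rule cInf_lower[OF _ dd_bdd]) simp
qed

lemma dd_le_bnd: "wft T \<Longrightarrow> dd (lft T) (rgt T) \<le> bnd T"
  unfolding dd_def by (rule cInf_lower[OF _ dd_bdd]) auto

lemma dd_le_bnd': "wft T \<Longrightarrow> dd (rgt T) (lft T) \<le> bnd T"
  using dd_le_bnd[of "swp T"] swp_props[of T] by simp

lemma dd_le_bdist: "dd \<le> bdist"
proof (intro le_funI)
  fix p q :: "'a proc"
  show "dd p q \<le> bdist p q"
  proof (cases "bdist p q < 1")
    case True
    then show ?thesis using dd_le_bnd[of "Lf p q"] by simp
  next
    case False
    then show ?thesis using unit_valuedD[OF dd_uv, of p q] by simp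
  qed
qed

lemma dd_par: "dd (PPar UNIV p1 p2) (PPar UNIV q1 q2) \<le> 1 - (1 - dd p1 q1) * (1 - dd p2 q2)"
  unfolding dd_def[of p1] dd_def[of p2]
proof (rule inf_comb)
  show "insert 1 (bnd ` {T. wft T \<and> lft T = p1 \<and> rgt T = q1}) \<noteq> {}"
       "insert 1 (bnd ` {T. wft T \<and> lft T = p2 \<and> rgt T = q2}) \<noteq> {}" by auto
  show "\<And>a. a \<in> insert 1 (bnd ` {T. wft T \<and> lft T = p1 \<and> rgt T = q1}) \<Longrightarrow> 0 \<le> a \<and> a \<le> 1"
       "\<And>a. a \<in> insert 1 (bnd ` {T. wft T \<and> lft T = p2 \<and> rgt T = q2}) \<Longrightarrow> 0 \<le> a \<and> a \<le> 1"
    using bnd_range by force+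
  fix a b assume a: "a \<in> insert 1 (bnd ` {T. wft T \<and> lft T = p1 \<and> rgt T = q1})"
    and b: "b \<in> insert 1 (bnd ` {T. wft T \<and> lft T = p2 \<and> rgt T = q2})"
  have d1: "dd (PPar UNIV p1 p2) (PPar UNIV q1 q2) \<le> 1" using unit_valuedD[OF dd_uv] by blast
  show "dd (PPar UNIV p1 p2) (PPar UNIV q1 q2) \<le> 1 - (1 - a) * (1 - b)"
  proof (cases "a = 1 \<or> b = 1")
    case True then show ?thesis using d1 by auto
  next
    case False
    then obtain T U where T: "wft T" "lft T = p1" "rgt T = q1" "a = bnd T"
      and U: "wft U" "lft U = p2" "rgt U = q2" "b = bnd U" using a b by auto
    show ?thesis using dd_le_bnd[of "Pa T U"] T U by simp
  qed
qed

lemma kant_dd_range: "0 \<le> kantorovich dd x y \<and> kantorovich dd x y \<le> 1"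
  using kant_range[OF dd_uv] by auto

lemma hausdorff_single: "hausdorff dh {x} {y} = max (dh x y) (dh y x)"
  by (simp add: hausdorff_def inf1_def sup0_def)

lemma main_tree: "wft T \<Longrightarrow> hausdorff (kantorovich dd) (der (lft T) a) (der (rgt T) a) \<le> bnd T"
proof (induction T)
  case (Lf p q)
  have "hausdorff (kantorovich dd) (der p a) (der q a) \<le> hausdorff (kantorovich bdist) (der p a) (der q a)"
    using kant_range[OF dd_uv] kant_range[OF bdist_uv] kant_mono[OF dd_uv bdist_uv dd_le_bdist]
    by (intro hausdorff_mono) auto
  also have "\<dots> \<le> bisim_op bdist p q"
    unfolding bisim_op_def
    by (rule sup0_ge[where f="\<lambda>a. hausdorff (kantorovich bdist) (der p a) (der q a)"])
       (use kant_range[OF bdist_uv] in \<open>auto intro!: conjunct2[OF hausdorff_range]\<close>)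
  also have "\<dots> = bdist p q" by (simp add: bdist_fix)
  finally show ?case by simp
next
  case Nl then show ?case by (simp add: der_nil hausdorff_def sup0_def)
next
  case (Pr b ws)
  show ?case
  proof (cases "a = b")
    case False
    then show ?thesis using bnd_range[OF Pr.prems] by (simp add: der_pre hausdorff_def sup0_def)
  next
    case True
    have ww: "wf_weights ws" using Pr.prems by simp
    have wfl: "pmf_of_list_wf ws" by (rule wf_weights_wf[OF ww])
    have wt: "\<And>x. x \<in> set ws \<Longrightarrow> wft (fst x)" using Pr.prems by simp
    have pos: "\<And>x. x \<in> set ws \<Longrightarrow> 0 \<le> snd x" using ww by (auto simp: wf_weights_def)
    have k1: "kantorovich dd (pmf_of_list (map (\<lambda>x. (lft (fst x), snd x)) ws))
                       (pmf_of_list (map (\<lambda>x. (rgt (fst x), snd x)) ws)) \<le> bnd (Pr b ws)"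
    proof -
      have "kantorovich dd (pmf_of_list (map (\<lambda>x. (lft (fst x), snd x)) ws))
                       (pmf_of_list (map (\<lambda>x. (rgt (fst x), snd x)) ws))
          \<le> (\<Sum>x\<leftarrow>ws. snd x * dd (lft (fst x)) (rgt (fst x)))" by (rule kant_list[OF dd_uv wfl])
      also have "\<dots> \<le> (\<Sum>x\<leftarrow>ws. snd x * bnd (fst x))"
        using pos wt by (intro sum_list_mono mult_left_mono) (force intro: dd_le_bnd)+
      finally show ?thesis by simp
    qed
    have k2: "kantorovich dd (pmf_of_list (map (\<lambda>x. (rgt (fst x), snd x)) ws))
                       (pmf_of_list (map (\<lambda>x. (lft (fst x), snd x)) ws)) \<le> bnd (Pr b ws)"
    proof -
      have "kantorovich dd (pmf_of_list (map (\<lambda>x. (rgt (fst x), snd x)) ws))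
                       (pmf_of_list (map (\<lambda>x. (lft (fst x), snd x)) ws))
          \<le> (\<Sum>x\<leftarrow>ws. snd x * dd (rgt (fst x)) (lft (fst x)))" by (rule kant_list[OF dd_uv wfl])
      also have "\<dots> \<le> (\<Sum>x\<leftarrow>ws. snd x * bnd (fst x))"
        using pos wt by (intro sum_list_mono mult_left_mono) (force intro: dd_le_bnd')+
      finally show ?thesis by simp
    qed
    show ?thesis using True ww k1 k2
      by (simp add: der_pre wf_weights_map hausdorff_single del: bnd.simps)
  qed
next
  case (Pa T U)
  have hT: "hausdorff (kantorovich dd) (der (lft T) a) (der (rgt T) a) \<le> bnd T" "bnd T < 1"
    using Pa bnd_range by auto
  have hU: "hausdorff (kantorovich dd) (der (lft U) a) (der (rgt U) a) \<le> bnd U" "bnd U < 1"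
    using Pa bnd_range by auto
  have "hausdorff (kantorovich dd) (case_prod (par_pmf UNIV) ` (der (lft T) a \<times> der (lft U) a))
                                  (case_prod (par_pmf UNIV) ` (der (rgt T) a \<times> der (rgt U) a))
        \<le> 1 - (1 - bnd T) * (1 - bnd U)"
  proof (rule hausdorff_prod[where dh="kantorovich dd" and c="par_pmf UNIV"])
    show "\<And>x y. 0 \<le> kantorovich dd x y \<and> kantorovich dd x y \<le> 1" by (rule kant_dd_range)
    show "hausdorff (kantorovich dd) (der (lft T) a) (der (rgt T) a) \<le> bnd T" "bnd T < 1" by (rule hT)+
    show "hausdorff (kantorovich dd) (der (lft U) a) (der (rgt U) a) \<le> bnd U" "bnd U < 1" by (rule hU)+
    fix p1 p2 q1 q2
    show "kantorovich dd (par_pmf UNIV p1 p2) (par_pmf UNIV q1 q2)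
          \<le> 1 - (1 - kantorovich dd p1 q1) * (1 - kantorovich dd p2 q2)"
      by (rule kant_par[where B=UNIV, OF dd_uv dd_par])
  qed
  then show ?case by (simp add: der_par)
qed

lemma bisim_dd: "bisim_op dd \<le> dd"
proof (intro le_funI)
  fix p q :: "'a proc"
  show "bisim_op dd p q \<le> dd p q"
    unfolding dd_def[of p q]
  proof (rule cInf_greatest)
    show "insert 1 (bnd ` {T. wft T \<and> lft T = p \<and> rgt T = q}) \<noteq> {}" by simp
    fix x assume "x \<in> insert 1 (bnd ` {T. wft T \<and> lft T = p \<and> rgt T = q})"
    then show "bisim_op dd p q \<le> x"
    proof
      assume "x = 1" then show ?thesis using unit_valuedD[OF bisim_range[OF dd_uv], of p q] by simp
    next
      assume "x \<in> bnd ` {T. wft T \<and> lft T = p \<and> rgt T = q}"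
      then obtain T where T: "wft T" "lft T = p" "rgt T = q" "x = bnd T" by auto
      show ?thesis unfolding bisim_op_def using T main_tree[OF T(1)] bnd_range[OF T(1)]
        by (intro sup0_le) auto
    qed
  qed
qed

lemma bdist_le_dd: "bdist \<le> dd"
  by (rule bdist_le[OF dd_uv bisim_dd])



lemma epow_range: "0 \<le> c \<Longrightarrow> c \<le> 1 \<Longrightarrow> 0 \<le> epow c n \<and> epow c n \<le> 1"
  by (cases n) (auto simp: epow_def power_le_one)

lemma epow_0: "epow c 0 = 1" by (simp add: epow_def zero_enat_def)
lemma epow_1: "epow c 1 = c" by (simp add: epow_def one_enat_def)

lemma epow_add: "epow c (m1 + m2) = epow c m1 * epow c m2"
  by (cases m1; cases m2) (auto simp: epow_def power_add)

lemma dda_range: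
  assumes "\<And>x. 0 \<le> e x \<and> e x \<le> 1"
  shows "0 \<le> dda m e \<and> dda m e \<le> 1"
proof -
  have r: "0 \<le> (\<Prod>x\<in>F. epow (1 - e x) (m x)) \<and> (\<Prod>x\<in>F. epow (1 - e x) (m x)) \<le> 1" for F
    using assms epow_range[of "1 - e _"] by (auto intro!: prod_nonneg prod_le_1)
  have ne: "{F. finite F} \<noteq> ({} :: 'a set set)" by auto
  have "0 \<le> (INF F\<in>{F. finite F}. \<Prod>x\<in>F. epow (1 - e x) (m x))"
    using r ne by (intro cINF_greatest) auto
  moreover have "(INF F\<in>{F. finite F}. \<Prod>x\<in>F. epow (1 - e x) (m x)) \<le> (\<Prod>x\<in>{}. epow (1 - e x) (m x))"
    using r by (intro cINF_lower bdd_belowI2[where m=0]) auto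
  ultimately show ?thesis unfolding dda_def by simp
qed

lemma dda_fin:
  assumes S: "finite S" "\<And>x. x \<notin> S \<Longrightarrow> m x = 0" and e: "\<And>x. 0 \<le> e x \<and> e x \<le> 1"
  shows "dda m e = 1 - (\<Prod>x\<in>S. epow (1 - e x) (m x))"
proof -
  let ?g = "\<lambda>x. epow (1 - e x) (m x)"
  have r: "0 \<le> ?g x \<and> ?g x \<le> 1" for x using e epow_range[of "1 - e x"] by auto
  have "(INF F\<in>{F. finite F}. prod ?g F) = prod ?g S"
  proof (rule antisym)
    show "(INF F\<in>{F. finite F}. prod ?g F) \<le> prod ?g S"
      using r S by (intro cINF_lower bdd_belowI2[where m=0]) (auto intro!: prod_nonneg)
    show "prod ?g S \<le> (INF F\<in>{F. finite F}. prod ?g F)"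
    proof (rule cINF_greatest)
      show "{F. finite F} \<noteq> ({} :: 'a set set)" by auto
      fix F :: "'a set" assume "F \<in> {F. finite F}"
      then have F: "finite F" by simp
      have "prod ?g F = prod ?g (F - (F \<inter> S)) * prod ?g (F \<inter> S)"
        using F by (intro prod.subset_diff) auto
      also have "prod ?g (F - (F \<inter> S)) = 1" using S by (intro prod.neutral) (auto simp: epow_0)
      also have "prod ?g S = prod ?g (S - (F \<inter> S)) * prod ?g (F \<inter> S)"
        using S by (intro prod.subset_diff) auto
      moreover have "prod ?g (S - (F \<inter> S)) * prod ?g (F \<inter> S) \<le> 1 * prod ?g (F \<inter> S)"
        using r by (intro mult_right_mono prod_le_1 prod_nonneg) auto
      ultimately show "prod ?g S \<le> prod ?g F" by simp
    qed
  qed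
  then show ?thesis unfolding dda_def by simp
qed

lemma dda_add:
  assumes f1: "finite {x. m1 x \<noteq> 0}" and f2: "finite {x. m2 x \<noteq> 0}"
    and e: "\<And>x. 0 \<le> e x \<and> e x \<le> 1"
  shows "dda (\<lambda>x. m1 x + m2 x) e = 1 - (1 - dda m1 e) * (1 - dda m2 e)"
proof -
  let ?S = "{x. m1 x \<noteq> 0} \<union> {x. m2 x \<noteq> 0}"
  have fS: "finite ?S" using f1 f2 by simp
  have "dda (\<lambda>x. m1 x + m2 x) e = 1 - (\<Prod>x\<in>?S. epow (1 - e x) (m1 x + m2 x))"
    by (rule dda_fin[OF fS _ e]) auto
  moreover have "dda m1 e = 1 - (\<Prod>x\<in>?S. epow (1 - e x) (m1 x))"
    by (rule dda_fin[OF fS _ e]) auto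
  moreover have "dda m2 e = 1 - (\<Prod>x\<in>?S. epow (1 - e x) (m2 x))"
    by (rule dda_fin[OF fS _ e]) auto
  ultimately show ?thesis by (simp add: epow_add prod.distrib)
qed

lemma wf_sem_list: "wf_weights qs \<Longrightarrow> pmf_of_list_wf (map (\<lambda>p. (sem (fst p), snd p)) qs)"
  by (auto simp: wf_weights_def pmf_of_list_wf_def comp_def)

lemma sem_fin: "wf_tm t \<Longrightarrow> m \<in> set_pmf (sem t) \<Longrightarrow> finite {x. m x \<noteq> 0}"
proof (induction t arbitrary: m)
  case (TVar v)
  then have "{x. m x \<noteq> 0} \<subseteq> {v}" by auto
  then show ?case by (rule finite_subset) simp
next
  case TNil then show ?case by simp
next
  case (TPre a qs)
  have wf: "pmf_of_list_wf (map (\<lambda>p. (sem (fst p), snd p)) qs)"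
    using TPre.prems by (intro wf_sem_list) simp
  from TPre.prems(2) obtain M where M: "M \<in> set_pmf (pmf_of_list (map (\<lambda>p. (sem (fst p), snd p)) qs))"
    "m \<in> set_pmf M" by auto
  then obtain p where p: "p \<in> set qs" "M = sem (fst p)" using set_pmf_of_list[OF wf] by auto
  show ?case using TPre.IH[OF _ _ _ M(2)[unfolded p(2)]] TPre.prems p(1)
    by (auto simp: fsts.intros)
next
  case (TCho t u) then show ?case by simp
next
  case (TPar B t u)
  then obtain m1 m2 where m: "m = (\<lambda>x. m1 x + m2 x)" "m1 \<in> set_pmf (sem t)" "m2 \<in> set_pmf (sem u)"
    by auto
  have "{x. m x \<noteq> 0} \<subseteq> {x. m1 x \<noteq> 0} \<union> {x. m2 x \<noteq> 0}" using m(1) by auto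
  then show ?case using TPar m by (meson finite_UnI finite_subset wf_tm.simps(5))
qed

fun tr :: "('v \<Rightarrow> 'a proc) \<Rightarrow> ('v \<Rightarrow> 'a proc) \<Rightarrow> ('a, 'v) tm \<Rightarrow> 'a ptree" where
  "tr s1 s2 (TVar x) = Lf (s1 x) (s2 x)"
| "tr s1 s2 TNil = Nl"
| "tr s1 s2 (TPre a qs) = Pr a (map (\<lambda>p. (tr s1 s2 (fst p), snd p)) qs)"
| "tr s1 s2 (TCho t u) = Nl"
| "tr s1 s2 (TPar B t u) = Pa (tr s1 s2 t) (tr s1 s2 u)"

lemma tr_lr: "ppt t \<Longrightarrow> lft (tr s1 s2 t) = subst s1 t \<and> rgt (tr s1 s2 t) = subst s2 t"
proof (induction t)
  case (TPre a qs)
  then have "\<forall>p\<in>set qs. lft (tr s1 s2 (fst p)) = subst s1 (fst p) \<and> rgt (tr s1 s2 (fst p)) = subst s2 (fst p)"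
    by (auto simp: fsts.intros)
  then show ?case by (simp add: comp_def)
qed auto

lemma tr_wf: "wf_tm t \<Longrightarrow> (\<forall>x. bdist (s1 x) (s2 x) < 1) \<Longrightarrow> wft (tr s1 s2 t)"
proof (induction t)
  case (TPre a qs)
  then show ?case by (auto simp: comp_def wf_weights_map fsts.intros)
qed auto

lemma tr_bnd:
  assumes "ppt t" "wf_tm t" "\<And>x. 0 \<le> e x \<and> e x \<le> 1" "e = (\<lambda>x. bdist (s1 x) (s2 x))"
  shows "bnd (tr s1 s2 t) = pda (sem t) e"
  using assms(1,2)
proof (induction t)
  case (TVar x)
  have "pda (sem (TVar x)) e = dda (\<lambda>y. if y = x then 1 else 0) e" by (simp add: pda_def)
  also have "\<dots> = 1 - (\<Prod>y\<in>{x}. epow (1 - e y) (if y = x then 1 else 0))"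
    by (rule dda_fin[OF _ _ assms(3)]) auto
  also have "\<dots> = e x" by (simp add: epow_1)
  finally show ?case using assms(4) by simp
next
  case TNil
  have "pda (sem TNil) e = dda (\<lambda>y. 0) e" by (simp add: pda_def)
  also have "\<dots> = 1 - (\<Prod>y\<in>{}. epow (1 - e y) 0)"
    by (rule dda_fin[OF _ _ assms(3)]) auto
  finally show ?case by simp
next
  case (TPre a qs)
  have wf: "pmf_of_list_wf (map (\<lambda>p. (sem (fst p), snd p)) qs)"
    using TPre.prems by (intro wf_sem_list) simp
  have db: "\<bar>dda m e\<bar> \<le> 1" for m using dda_range[OF assms(3), of m] by simp
  have "pda (sem (TPre a qs)) e = measure_pmf.expectation (pmf_of_list (map (\<lambda>p. (sem (fst p), snd p)) qs))
        (\<lambda>M. pda M e)"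
    unfolding pda_def sem.simps by (subst integral_bind_pmf_bdd[OF db]) simp
  also have "\<dots> = (\<Sum>p\<leftarrow>qs. snd p * pda (sem (fst p)) e)"
    unfolding expectation_pmf_of_list[OF wf] by (simp add: comp_def)
  also have "\<dots> = (\<Sum>p\<leftarrow>qs. snd p * bnd (tr s1 s2 (fst p)))"
    using TPre by (intro arg_cong[where f=sum_list] map_cong refl) (auto simp: fsts.intros)
  finally show ?case by (simp add: comp_def)
next
  case (TCho t u) then show ?case by simp
next
  case (TPar B t u)
  have wt: "wf_tm t" "wf_tm u" using TPar.prems by auto
  have db: "\<bar>dda m e\<bar> \<le> 1" for m using dda_range[OF assms(3), of m] by simp
  have db1: "\<bar>1 - dda m e\<bar> \<le> 1" for m using dda_range[OF assms(3), of m] by simp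
  have "pda (sem (TPar B t u)) e = measure_pmf.expectation (pair_pmf (sem t) (sem u))
        (\<lambda>z. dda (\<lambda>x. fst z x + snd z x) e)"
    unfolding pda_def sem.simps integral_map_pmf by (simp add: case_prod_unfold)
  also have "\<dots> = measure_pmf.expectation (pair_pmf (sem t) (sem u))
        (\<lambda>z. 1 - (1 - dda (fst z) e) * (1 - dda (snd z) e))"
  proof (rule integral_cong_AE)
    show "AE z in measure_pmf (pair_pmf (sem t) (sem u)). dda (\<lambda>x. fst z x + snd z x) e = 1 - (1 - dda (fst z) e) * (1 - dda (snd z) e)"
      unfolding AE_measure_pmf_iff
    proof (intro ballI)
      fix z assume "z \<in> set_pmf (pair_pmf (sem t) (sem u))"
      then have z: "fst z \<in> set_pmf (sem t)" "snd z \<in> set_pmf (sem u)" by (auto simp: mem_Times_iff)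
      show "dda (\<lambda>x. fst z x + snd z x) e = 1 - (1 - dda (fst z) e) * (1 - dda (snd z) e)"
        by (rule dda_add[OF sem_fin[OF wt(1) z(1)] sem_fin[OF wt(2) z(2)] assms(3)])
    qed
  qed simp_all
  also have "\<dots> = 1 - measure_pmf.expectation (pair_pmf (sem t) (sem u))
        (\<lambda>(x, y). (1 - dda x e) * (1 - dda y e))"
    by (subst exp_one_minus[where B=1, symmetric])
       (use db1 in \<open>auto simp: case_prod_unfold abs_mult intro!: mult_le_one\<close>)
  also have "\<dots> = 1 - (1 - pda (sem t) e) * (1 - pda (sem u) e)"
  proof -
    show ?thesis
      using expectation_pair_mult[where f="\<lambda>x. 1 - dda x e" and g="\<lambda>x. 1 - dda x e"
        and A="sem t" and D="sem u", OF db1 db1]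
      by (simp add: pda_def exp_one_minus[OF db])
  qed
  finally show ?case using TPar by simp
qed


theorem proposition3:
  fixes t :: "('a::countable, 'v::countable) tm"
    and \<sigma>1 \<sigma>2 :: "'v \<Rightarrow> 'a proc"
  assumes "infinite (UNIV :: 'v set)"
    and "ppt t" and "wf_tm t"
    and "\<forall>x. wf_proc (\<sigma>1 x)" and "\<forall>x. wf_proc (\<sigma>2 x)"
    and "\<forall>x. bdist (\<sigma>1 x) (\<sigma>2 x) < 1"
  shows "bdist (subst \<sigma>1 t) (subst \<sigma>2 t) \<le> pda (sem t) (\<lambda>x. bdist (\<sigma>1 x) (\<sigma>2 x))"
proof -
  let ?T = "tr \<sigma>1 \<sigma>2 t"
  have lr: "lft ?T = subst \<sigma>1 t" "rgt ?T = subst \<sigma>2 t" using tr_lr[OF assms(2)] by auto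
  have wf: "wft ?T" by (rule tr_wf[OF assms(3) assms(6)])
  have e01: "\<And>x. 0 \<le> bdist (\<sigma>1 x) (\<sigma>2 x) \<and> bdist (\<sigma>1 x) (\<sigma>2 x) \<le> 1"
    using unit_valuedD[OF bdist_uv] by blast
  have "bdist (subst \<sigma>1 t) (subst \<sigma>2 t) = bdist (lft ?T) (rgt ?T)" using lr by simp
  also have "\<dots> \<le> dd (lft ?T) (rgt ?T)" using bdist_le_dd by (metis le_funD)
  also have "\<dots> \<le> bnd ?T" by (rule dd_le_bnd[OF wf])
  also have "\<dots> = pda (sem t) (\<lambda>x. bdist (\<sigma>1 x) (\<sigma>2 x))"
    by (rule tr_bnd[OF assms(2) assms(3) e01 refl])
  finally show ?thesis .
qed

end
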